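(* Let $N$ be the surface described in the context, with $l>0$. The configuration $((0,0),(0,\pi))$ in $N$ (two antipodal points on the circle $\{0\}\times S^1$ where $H_0$ is glued) is insecure; in particular $N$ is not a secure manifold.
   Context: Construction of $N$: let $C=[0,l]\times S^1$ be the flat cylinder of length $l>0$ and radius $1$, with points written $(t,\theta)$, $t\in[0,l]$, $\theta\in\mathbb{R}/2\pi\mathbb{Z}$. Let $H_0$ and $H_l$ be two hemispheres of the round unit sphere, and let $N$ be obtained by gluing the equator of $H_0$ isometrically to $\{0\}\times S^1$ and the equator of $H_l$ isometrically to $\{l\}\times S^1$, so that $N$ is a closed $C^1$ surface with a piecewise smooth Riemannian metric; geodesics of $N$ are the $C^1$ curves that are geodesics in each of the pieces. Conventions: a geodesic has positive finite length and is parametrized by $[0,1]$ proportionally to arclength; $G(x,y)$ is the set of geodesics from $x$ to $y$; a geodesic passes through $z$ if $z=\gamma(t)$ for some $t\in(0,1)$; $(x,y)$ is secure if there is a finite set $B$ such that every geodesic in $G(x,y)$ passes through a point of $B$, insecure otherwise; a manifold is secure if all its configurations are secure. *)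

theory Defs
  imports "HOL-Analysis.Analysis"
begin

type_synonym pt = "real \<times> real \<times> real"

text \<open>The surface N embedded isometrically in R^3 as the boundary of a capsule:
  cylinder point (t,theta) is (t, cos theta, sin theta); H_0 is the unit hemisphere
  centred at the origin with x <= 0; H_l the unit hemisphere centred at (l,0,0) with x >= l.\<close>

definition cyl_param :: "real \<Rightarrow> real \<Rightarrow> pt" where
  "cyl_param t \<theta> = (t, cos \<theta>, sin \<theta>)"

definition Cyl :: "real \<Rightarrow> pt set" where
  "Cyl l = {(x,y,z). 0 \<le> x \<and> x \<le> l \<and> y\<^sup>2 + z\<^sup>2 = 1}"

definition Hem0 :: "pt set" where
  "Hem0 = {(x,y,z). x \<le> 0 \<and> x\<^sup>2 + y\<^sup>2 + z\<^sup>2 = 1}"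

definition Heml :: "real \<Rightarrow> pt set" where
  "Heml l = {(x,y,z). l \<le> x \<and> (x - l)\<^sup>2 + y\<^sup>2 + z\<^sup>2 = 1}"

definition Nsurf :: "real \<Rightarrow> pt set" where
  "Nsurf l = Cyl l \<union> Hem0 \<union> Heml l"

definition nrm_cyl :: "pt \<Rightarrow> pt" where "nrm_cyl = (\<lambda>(x,y,z). (0,y,z))"
definition nrm_hem0 :: "pt \<Rightarrow> pt" where "nrm_hem0 = (\<lambda>(x,y,z). (x,y,z))"
definition nrm_heml :: "real \<Rightarrow> pt \<Rightarrow> pt" where "nrm_heml l = (\<lambda>(x,y,z). (x - l,y,z))"

definition pieces :: "real \<Rightarrow> (pt set \<times> (pt \<Rightarrow> pt)) set" where
  "pieces l = {(Cyl l, nrm_cyl), (Hem0, nrm_hem0), (Heml l, nrm_heml l)}"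

definition piece_geodesic :: "pt set \<Rightarrow> (pt \<Rightarrow> pt) \<Rightarrow> (real \<Rightarrow> pt) \<Rightarrow> real \<Rightarrow> real \<Rightarrow> bool" where
  "piece_geodesic P nrm \<gamma> a b \<longleftrightarrow>
     (\<forall>s\<in>{a..b}. \<gamma> s \<in> P) \<and>
     (\<exists>\<gamma>' \<gamma>''. \<forall>s\<in>{a..b}.
         (\<gamma> has_vector_derivative \<gamma>' s) (at s within {a..b}) \<and>
         (\<gamma>' has_vector_derivative \<gamma>'' s) (at s within {a..b}) \<and>
         (\<exists>c. \<gamma>'' s = c *\<^sub>R nrm (\<gamma> s)))"

definition N_geodesic :: "real \<Rightarrow> (real \<Rightarrow> pt) \<Rightarrow> bool" where
  "N_geodesic l \<gamma> \<longleftrightarrow>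
     (\<exists>\<gamma>'. (\<forall>s\<in>{0..1}. (\<gamma> has_vector_derivative \<gamma>' s) (at s within {0..1})) \<and>
           continuous_on {0..1} \<gamma>' \<and>
           (\<exists>c>0. \<forall>s\<in>{0..1}. norm (\<gamma>' s) = c)) \<and>
     (\<exists>(k::nat) (u::nat \<Rightarrow> real). u 0 = 0 \<and> u k = 1 \<and>
        (\<forall>i<k. u i < u (Suc i) \<and>
           (\<exists>(P, nrm) \<in> pieces l. piece_geodesic P nrm \<gamma> (u i) (u (Suc i)))))"

definition G :: "real \<Rightarrow> pt \<Rightarrow> pt \<Rightarrow> (real \<Rightarrow> pt) set" where
  "G l x y = {\<gamma>. N_geodesic l \<gamma> \<and> \<gamma> 0 = x \<and> \<gamma> 1 = y}"

definition passes_through :: "(real \<Rightarrow> pt) \<Rightarrow> pt \<Rightarrow> bool" where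
  "passes_through \<gamma> z \<longleftrightarrow> (\<exists>t\<in>{0<..<1}. \<gamma> t = z)"

definition secure_config :: "real \<Rightarrow> pt \<Rightarrow> pt \<Rightarrow> bool" where
  "secure_config l x y \<longleftrightarrow>
     (\<exists>B. finite B \<and> (\<forall>\<gamma>\<in>G l x y. \<exists>b\<in>B. passes_through \<gamma> b))"

definition secure_manifold :: "real \<Rightarrow> bool" where
  "secure_manifold l \<longleftrightarrow> (\<forall>x\<in>Nsurf l. \<forall>y\<in>Nsurf l. secure_config l x y)"

end

theory Submission
  imports Defs
begin

definition gg :: "real \<Rightarrow> real \<Rightarrow> pt" where
  "gg b s = (- sqrt (1 - b\<^sup>2) * sin (pi * s), cos (pi * s), b * sin (pi * s))"

definition gg' :: "real \<Rightarrow> real \<Rightarrow> pt" where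
  "gg' b s = (- sqrt (1 - b\<^sup>2) * (pi * cos (pi * s)), - (pi * sin (pi * s)), b * (pi * cos (pi * s)))"

definition gg'' :: "real \<Rightarrow> real \<Rightarrow> pt" where
  "gg'' b s = (- sqrt (1 - b\<^sup>2) * (- (pi * (pi * sin (pi * s)))), - (pi * (pi * cos (pi * s))), b * (- (pi * (pi * sin (pi * s)))))"

lemma d1: "(gg b has_vector_derivative gg' b s) (at s within S)"
  unfolding gg_def gg'_def
  by (intro has_vector_derivative_Pair; 
      simp only: has_real_derivative_iff_has_vector_derivative[symmetric];
      (rule derivative_eq_intros refl)+; simp)

lemma d2: "(gg' b has_vector_derivative gg'' b s) (at s within S)"
  unfolding gg''_def gg'_def
  by (intro has_vector_derivative_Pair; 
      simp only: has_real_derivative_iff_has_vector_derivative[symmetric];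
      (rule derivative_eq_intros refl)+; simp)

lemma nrm: "gg'' b s = (- (pi * pi)) *\<^sub>R nrm_hem0 (gg b s)"
  unfolding gg''_def gg_def nrm_hem0_def by (simp add: algebra_simps)

lemma normgg':
  assumes "\<bar>b\<bar> \<le> 1" shows "norm (gg' b s) = pi"
proof -
  have s: "(sqrt (1 - b\<^sup>2))\<^sup>2 = 1 - b\<^sup>2" using assms by (simp add: abs_square_le_1)
  have "norm (gg' b s) = sqrt ((sqrt (1 - b\<^sup>2))\<^sup>2 * pi\<^sup>2 * (cos (pi * s))\<^sup>2 + pi\<^sup>2 * (sin (pi * s))\<^sup>2 + b\<^sup>2 * pi\<^sup>2 * (cos (pi * s))\<^sup>2)"
    unfolding gg'_def by (simp add: norm_Pair power_mult_distrib add.assoc)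
  also have "\<dots> = sqrt (pi\<^sup>2 * ((cos (pi * s))\<^sup>2 + (sin (pi * s))\<^sup>2))" unfolding s
    by (rule arg_cong[where f=sqrt]) (simp add: algebra_simps; metis distrib_left mult.right_neutral sin_cos_squared_add2)
  also have "\<dots> = sqrt (pi\<^sup>2)" by simp
  also have "\<dots> = pi" by simp
  finally show ?thesis .
qed

lemma inHem:
  assumes "\<bar>b\<bar> \<le> 1" "s \<in> {0..1}" shows "gg b s \<in> Hem0"
proof -
  have s: "(sqrt (1 - b\<^sup>2))\<^sup>2 = 1 - b\<^sup>2" using assms by (simp add: abs_square_le_1)
  have "sin (pi * s) \<ge> 0" using assms by (intro sin_ge_zero) auto
  then have "sqrt (1 - b\<^sup>2) * sin (pi * s) \<ge> 0" using assms by (intro mult_nonneg_nonneg) (auto simp: abs_square_le_1)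
  moreover have "(sqrt (1 - b\<^sup>2))\<^sup>2 * (sin (pi * s))\<^sup>2 + (cos (pi * s))\<^sup>2 + b\<^sup>2 * (sin (pi * s))\<^sup>2 = 1"
    unfolding s by (simp add: algebra_simps)
  ultimately show ?thesis unfolding gg_def Hem0_def by (simp add: power_mult_distrib)
qed

lemma geo:
  assumes "\<bar>b\<bar> \<le> 1" shows "gg b \<in> G l (cyl_param 0 0) (cyl_param 0 pi)"
proof -
  have "piece_geodesic Hem0 nrm_hem0 (gg b) 0 1"
    unfolding piece_geodesic_def using inHem[OF assms] d1 d2 nrm by blast
  moreover have "(Hem0, nrm_hem0) \<in> pieces l" unfolding pieces_def by simp
  moreover have "continuous_on {0..1} (gg' b)" unfolding gg'_def by (intro continuous_intros)
  ultimately have "N_geodesic l (gg b)" unfolding N_geodesic_def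
    apply (intro conjI)
     apply (rule exI[of _ "gg' b"]) using d1 normgg'[OF assms] pi_gt_zero apply blast
    apply (rule exI[of _ 1], rule exI[of _ "\<lambda>i. real i"]) by auto
  then show ?thesis unfolding G_def gg_def cyl_param_def by simp
qed

definition ff :: "pt \<Rightarrow> real" where
  "ff p = snd (snd p) / sqrt ((fst p)\<^sup>2 + (snd (snd p))\<^sup>2)"

lemma ffpass:
  assumes "\<bar>b\<bar> \<le> 1" "passes_through (gg b) p" shows "ff p = b"
proof -
  obtain t where t: "t \<in> {0<..<1}" "gg b t = p" using assms(2) unfolding passes_through_def by blast
  have s: "(sqrt (1 - b\<^sup>2))\<^sup>2 = 1 - b\<^sup>2" using assms by (simp add: abs_square_le_1)
  have sp: "sin (pi * t) > 0" using t by (intro sin_gt_zero) auto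
  have "(sqrt (1 - b\<^sup>2) * sin (pi * t))\<^sup>2 + (b * sin (pi * t))\<^sup>2 = (sin (pi * t))\<^sup>2"
    by (simp add: power_mult_distrib s algebra_simps)
  then have "sqrt ((sqrt (1 - b\<^sup>2) * sin (pi * t))\<^sup>2 + (b * sin (pi * t))\<^sup>2) = sin (pi * t)"
    using sp by simp
  then show ?thesis using t sp unfolding ff_def gg_def by auto
qed

theorem mainTheorem7:
  fixes l :: real
  assumes "l > 0"
  shows "\<not> secure_config l (cyl_param 0 0) (cyl_param 0 pi) \<and> \<not> secure_manifold l"
proof -
  have ns: "\<not> secure_config l (cyl_param 0 0) (cyl_param 0 pi)"
  proof
    assume "secure_config l (cyl_param 0 0) (cyl_param 0 pi)"
    then obtain B where B: "finite B" "\<forall>\<gamma>\<in>G l (cyl_param 0 0) (cyl_param 0 pi). \<exists>p\<in>B. passes_through \<gamma> p"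
      unfolding secure_config_def by blast
    have "infinite {-1..(1::real)}" by (simp add: infinite_Icc)
    then obtain b where b: "b \<in> {-1..1}" "b \<notin> ff ` B"
      using B(1) by (metis finite_imageI finite_subset subsetI)
    then have ab: "\<bar>b\<bar> \<le> 1" by auto
    then obtain p where "p \<in> B" "passes_through (gg b) p" using B(2) geo by blast
    then show False using ffpass[OF ab] b by (metis image_eqI)
  qed
  moreover have "cyl_param 0 0 \<in> Nsurf l" "cyl_param 0 pi \<in> Nsurf l"
    using assms unfolding Nsurf_def Cyl_def cyl_param_def by auto
  ultimately show ?thesis unfolding secure_manifold_def by blast
qed

end
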